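(* Let $K\in\mathcal S_n$ be nonempty and bounded and let $u\in S^{n-1}$. Assume that for every $x\in P_{u^\perp}(K)$, writing $K\cap(x+\mathbb Ru)=[x+su,x+tu]$, there exist $z,w\in\mathbb R^n$ such that the lens $L=B(z,1)\cap B(w,1)$ satisfies $K\subseteq L$, $x+tu\in\partial L$, $x+su\in\partial L$, and $S_u(L)\in\mathcal S_n$. Then $S_u(K)\in\mathcal S_n$.
   Context: For $x\in\mathbb R^n$, $B(x,1)$ is the closed Euclidean unit ball centered at $x$. The class $\mathcal S_n$ of ball-bodies consists of all intersections of families of closed Euclidean unit balls in $\mathbb R^n$. $P_{u^\perp}$ denotes orthogonal projection onto $u^\perp$. For a compact convex set $K$ and $u\in S^{n-1}$, for each $x\in P_{u^\perp}(K)$ write $K\cap(x+\mathbb Ru)=[x+a(x)u,x+b(x)u]$; the Steiner symmetral is $S_u(K)=\{x+yu: x\in P_{u^\perp}(K),\ |y|\le |b(x)-a(x)|/2\}$. *)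

theory Defs
  imports "HOL-Analysis.Analysis"
begin

definition ball_body :: "'a::euclidean_space set \<Rightarrow> bool" where
  "ball_body K \<longleftrightarrow> (\<exists>C. K = (\<Inter>z\<in>C. cball z 1))"

definition proj_perp :: "'a::euclidean_space \<Rightarrow> 'a \<Rightarrow> 'a" where
  "proj_perp u x = x - (x \<bullet> u) *\<^sub>R u"

definition chord_lo :: "'a::euclidean_space set \<Rightarrow> 'a \<Rightarrow> 'a \<Rightarrow> real" where
  "chord_lo K u x = Inf {t. x + t *\<^sub>R u \<in> K}"

definition chord_hi :: "'a::euclidean_space set \<Rightarrow> 'a \<Rightarrow> 'a \<Rightarrow> real" where
  "chord_hi K u x = Sup {t. x + t *\<^sub>R u \<in> K}"

definition steiner :: "'a::euclidean_space \<Rightarrow> 'a set \<Rightarrow> 'a set" where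
  "steiner u K = {x + y *\<^sub>R u | x y. x \<in> proj_perp u ` K \<and>
      \<bar>y\<bar> \<le> \<bar>chord_hi K u x - chord_lo K u x\<bar> / 2}"

end

theory Submission
  imports Defs
begin


lemma ball_body_closed_convex:
  assumes "ball_body K" shows "closed K" "convex K"
  using assms unfolding ball_body_def by (auto intro!: closed_INT convex_INT)

lemma proj_perp_inner: "norm u = 1 \<Longrightarrow> proj_perp u x \<bullet> u = 0"
  unfolding proj_perp_def by (simp add: inner_diff_left dot_square_norm)

lemma proj_perp_add: "norm u = 1 \<Longrightarrow> proj_perp u (x + r *\<^sub>R u) = proj_perp u x"
  unfolding proj_perp_def by (simp add: inner_add_left dot_square_norm algebra_simps)

lemma proj_perp_id: "x \<bullet> u = 0 \<Longrightarrow> proj_perp u x = x"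
  unfolding proj_perp_def by simp

lemma proj_perp_decomp: "x = proj_perp u x + (x \<bullet> u) *\<^sub>R u"
  unfolding proj_perp_def by simp

lemma proj_perp_diff: "proj_perp u (x - y) = proj_perp u x - proj_perp u y"
  unfolding proj_perp_def by (simp add: inner_diff_left algebra_simps)

lemma norm_orth_sq:
  assumes "d \<bullet> u = 0" "norm u = 1"
  shows "(norm (d + r *\<^sub>R u))\<^sup>2 = (norm d)\<^sup>2 + r\<^sup>2"
proof -
  have "u \<bullet> u = 1" using assms(2) by (simp add: dot_square_norm)
  then have "(d + r *\<^sub>R u) \<bullet> (d + r *\<^sub>R u) = d \<bullet> d + r\<^sup>2" using assms(1)
    by (simp add: inner_add_left inner_add_right inner_commute power2_eq_square)
  then show ?thesis by (simp add: dot_square_norm)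
qed

lemma spindle:
  fixes q k c v :: "'a::euclidean_space"
  assumes "norm (q - c) \<le> 1" "norm (k - c) \<le> 1" "0 \<le> \<beta>" "\<beta> \<le> 1" "0 \<le> \<delta>" "norm v \<le> 1"
    and "2*\<delta> + \<delta>\<^sup>2 + 2*\<delta>*\<beta>*(v \<bullet> (k - q)) + \<beta>\<^sup>2 * ((k-q) \<bullet> (k-q)) \<le> \<beta> * ((k-q) \<bullet> (k-q))"
  shows "norm (q + \<beta> *\<^sub>R (k - q) + \<delta> *\<^sub>R v - c) \<le> 1"
proof -
  define a where "a = q - c"
  define w where "w = k - q"
  have e: "q + \<beta> *\<^sub>R (k - q) + \<delta> *\<^sub>R v - c = a + \<beta> *\<^sub>R w + \<delta> *\<^sub>R v"
    unfolding a_def w_def by (simp add: algebra_simps)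
  have aa: "a \<bullet> a \<le> 1" using assms(1) unfolding a_def
    by (metis dot_square_norm norm_ge_zero power_le_one)
  have kc: "k - c = a + w" unfolding a_def w_def by simp
  have aw: "a \<bullet> a + 2 * (a \<bullet> w) + w \<bullet> w \<le> 1"
  proof -
    have "(a + w) \<bullet> (a + w) \<le> 1" using assms(2) unfolding kc[symmetric]
      by (metis dot_square_norm norm_ge_zero power_le_one)
    then show ?thesis by (simp add: inner_add_left inner_add_right inner_commute)
  qed
  have vv: "v \<bullet> v \<le> 1" using assms(6) by (metis dot_square_norm norm_ge_zero power_le_one)
  have av: "2 * (a \<bullet> v) \<le> a \<bullet> a + v \<bullet> v"
  proof -
    have "0 \<le> (a - v) \<bullet> (a - v)" by simp
    then show ?thesis by (simp add: inner_diff_left inner_diff_right inner_commute)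
  qed
  have ex: "(a + \<beta> *\<^sub>R w + \<delta> *\<^sub>R v) \<bullet> (a + \<beta> *\<^sub>R w + \<delta> *\<^sub>R v)
     = a \<bullet> a + \<beta>\<^sup>2 * (w \<bullet> w) + \<delta>\<^sup>2 * (v \<bullet> v) + 2*\<beta>*(a \<bullet> w) + 2*\<delta>*(a \<bullet> v) + 2*\<beta>*\<delta>*(v \<bullet> w)"
    by (simp add: inner_add_left inner_add_right inner_commute power2_eq_square algebra_simps)
  have f1: "2*\<beta>*(a \<bullet> w) \<le> \<beta> * (1 - a \<bullet> a - w \<bullet> w)"
    using mult_left_mono[OF _ assms(3), of "2 * (a \<bullet> w)" "1 - a \<bullet> a - w \<bullet> w"] aw by (simp add: algebra_simps)
  have f2: "2*\<delta>*(a \<bullet> v) \<le> \<delta> * (a \<bullet> a + 1)"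
    using mult_left_mono[OF _ assms(5), of "2 * (a \<bullet> v)" "a \<bullet> a + 1"] av vv by (simp add: algebra_simps)
  have f3: "\<delta>\<^sup>2 * (v \<bullet> v) \<le> \<delta>\<^sup>2"
    using mult_left_mono[OF vv, of "\<delta>\<^sup>2"] by simp
  have f4: "(1 - \<beta> + \<delta>) * (a \<bullet> a) \<le> 1 - \<beta> + \<delta>"
    using mult_left_mono[OF aa, of "1 - \<beta> + \<delta>"] assms(4,5) by simp
  have hyp: "2*\<delta> + \<delta>\<^sup>2 + 2*\<delta>*\<beta>*(v \<bullet> w) + \<beta>\<^sup>2 * (w \<bullet> w) \<le> \<beta> * (w \<bullet> w)"
    using assms(7) unfolding w_def .
  have "(a + \<beta> *\<^sub>R w + \<delta> *\<^sub>R v) \<bullet> (a + \<beta> *\<^sub>R w + \<delta> *\<^sub>R v) \<le> 1"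
    unfolding ex using f1 f2 f3 f4 hyp by (simp add: algebra_simps)
  then show ?thesis unfolding e
    by (metis dot_square_norm norm_ge_zero power2_le_imp_le one_power2 zero_le_one)
qed


lemma key_ball:
  fixes K :: "'a::euclidean_space set"
  assumes KC: "K = (\<Inter>c\<in>C. cball c 1)" and q: "q \<in> K" and nu: "norm \<nu> = 1"
    and mx: "\<forall>k\<in>K. \<nu> \<bullet> k \<le> \<nu> \<bullet> q"
  shows "K \<subseteq> cball (q - \<nu>) 1"
proof
  fix k assume k: "k \<in> K"
  show "k \<in> cball (q - \<nu>) 1"
  proof (rule ccontr)
    assume "k \<notin> cball (q - \<nu>) 1"
    then have "norm (k - q + \<nu>) > 1"
      by (simp add: dist_norm norm_minus_commute algebra_simps)
    define w where "w = k - q"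
    define W where "W = w \<bullet> w"
    define p where "p = - (\<nu> \<bullet> w)"
    have nn: "\<nu> \<bullet> \<nu> = 1" using nu by (simp add: dot_square_norm)
    have "(w + \<nu>) \<bullet> (w + \<nu>) > 1"
      using \<open>norm (k - q + \<nu>) > 1\<close> unfolding w_def
      by (metis dot_square_norm less_1_mult norm_ge_zero power2_eq_square abs_of_nonneg real_sqrt_abs real_sqrt_gt_1_iff)
    then have "W + 2 * (\<nu> \<bullet> w) + 1 > 1"
      using nn unfolding W_def by (simp add: inner_add_left inner_add_right inner_commute)
    define e where "e = W - 2 * p"
    have e0: "e > 0" using \<open>W + 2 * (\<nu> \<bullet> w) + 1 > 1\<close> unfolding e_def p_def by simp
    have p0: "p \<ge> 0" using mx k unfolding p_def w_def by (simp add: inner_diff_right)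
    have W0: "W \<ge> e" unfolding e_def using p0 by simp
    define \<beta> where "\<beta> = e / (W\<^sup>2/2 + 2*W + 2)"
    define \<delta> where "\<delta> = \<beta> * (p + e/4)"
    have den: "W\<^sup>2/2 + 2*W + 2 > 0" using W0 e0 by (simp add: add_pos_nonneg)
    have b0: "\<beta> > 0" unfolding \<beta>_def using e0 den by simp
    have b1: "\<beta> \<le> 1"
    proof -
      have "0 \<le> W\<^sup>2/2" by simp
      then have "e \<le> W\<^sup>2/2 + 2*W + 2" using W0 e0 by linarith
      then show ?thesis unfolding \<beta>_def using den by (simp add: divide_le_eq)
    qed
    have d0: "\<delta> \<ge> 0" unfolding \<delta>_def using b0 p0 e0 by simp
    have bW: "\<beta> * (W\<^sup>2/4 + W) \<le> e/2"
    proof -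
      have "\<beta> * (W\<^sup>2/2 + 2*W + 2) = e" unfolding \<beta>_def using den by simp
      moreover have "\<beta> * (W\<^sup>2/4 + W) * 2 \<le> \<beta> * (W\<^sup>2/2 + 2*W + 2)"
        using b0 by (simp add: algebra_simps)
      ultimately show ?thesis by linarith
    qed
    have dle: "\<delta> \<le> \<beta> * W / 2"
    proof -
      have "\<delta> = \<beta>*p/2 + \<beta>*W/4" unfolding \<delta>_def e_def by (simp add: field_simps)
      moreover have "\<beta>*(2*p) \<le> \<beta>*W" using b0 e0 unfolding e_def by (intro mult_left_mono) auto
      ultimately show ?thesis by linarith
    qed
    have dsq: "\<delta>\<^sup>2 \<le> \<beta>\<^sup>2 * W\<^sup>2 / 4"
    proof -
      have "\<delta>\<^sup>2 \<le> (\<beta> * W / 2)\<^sup>2" using dle d0 by (simp add: power_mono)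
      then show ?thesis by (simp add: power2_eq_square algebra_simps)
    qed
    have d2: "2 * \<delta> = \<beta> * W - \<beta> * e / 2" unfolding \<delta>_def e_def by (simp add: field_simps)
    have dbp: "\<delta> * \<beta> * p \<ge> 0" using d0 b0 p0 by simp
    have hyp: "2*\<delta> + \<delta>\<^sup>2 + 2*\<delta>*\<beta>*(\<nu> \<bullet> (k - q)) + \<beta>\<^sup>2 * ((k-q) \<bullet> (k-q)) \<le> \<beta> * ((k-q) \<bullet> (k-q))"
    proof -
      have "\<beta>\<^sup>2 * W\<^sup>2 / 4 + \<beta>\<^sup>2 * W = \<beta> * (\<beta> * (W\<^sup>2/4 + W))" by (simp add: power2_eq_square algebra_simps)
      also have "\<dots> \<le> \<beta> * (e/2)" by (rule mult_left_mono) (use bW b0 in auto)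
      finally have "\<beta>\<^sup>2 * W\<^sup>2 / 4 + \<beta>\<^sup>2 * W \<le> \<beta> * (e/2)" .
      moreover have "\<nu> \<bullet> (k - q) = - p" unfolding p_def w_def by simp
      ultimately show ?thesis using d2 dsq dbp unfolding W_def[symmetric] w_def[symmetric]
        by (simp add: algebra_simps)
    qed
    define x where "x = q + \<beta> *\<^sub>R (k - q) + \<delta> *\<^sub>R \<nu>"
    have "x \<in> K"
    proof -
      have "\<forall>c\<in>C. norm (x - c) \<le> 1"
      proof
        fix c assume c: "c \<in> C"
        have "norm (q - c) \<le> 1" "norm (k - c) \<le> 1" using q k c KC
          by (auto simp: dist_norm norm_minus_commute)
        then show "norm (x - c) \<le> 1" unfolding x_def
          using spindle[OF _ _ _ b1 d0 _ hyp] b0 nu by simp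
      qed
      then show ?thesis using KC by (auto simp: dist_norm norm_minus_commute)
    qed
    moreover have "\<nu> \<bullet> x = \<nu> \<bullet> q + \<beta> * e / 4"
      unfolding x_def using nn unfolding \<delta>_def e_def p_def w_def
      by (simp add: inner_add_right inner_diff_right algebra_simps)
    moreover have "\<beta> * e > 0" using b0 e0 by simp
    ultimately show False using mx by fastforce
  qed
qed

lemma interior_nonempty:
  fixes K :: "'a::euclidean_space set"
  assumes KC: "K = (\<Inter>c\<in>C. cball c 1)" and q: "q \<in> K" and k: "k \<in> K" and qk: "q \<noteq> k"
  shows "interior K \<noteq> {}"
proof -
  define n where "n = norm (k - q)"
  have n0: "n > 0" using qk unfolding n_def by simp
  define \<delta> where "\<delta> = min 1 (n\<^sup>2 / (4 * (3 + n)))"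
  have d0: "\<delta> > 0" unfolding \<delta>_def using n0 by simp
  have d1: "\<delta> \<le> 1" unfolding \<delta>_def by simp
  have d3: "\<delta> * (3 + n) \<le> n\<^sup>2 / 4"
  proof -
    have "\<delta> \<le> n\<^sup>2 / (4 * (3 + n))" unfolding \<delta>_def by simp
    then have "\<delta> * (3 + n) \<le> n\<^sup>2 / (4 * (3 + n)) * (3 + n)" by (rule mult_right_mono) (use n0 in simp)
    also have "\<dots> = n\<^sup>2 / 4"
    proof -
      have "3 + n \<noteq> 0" using n0 by simp
      then show ?thesis by (simp add: field_simps)
    qed
    finally show ?thesis .
  qed
  define m where "m = q + (1/2) *\<^sub>R (k - q)"
  have "ball m \<delta> \<subseteq> K"
  proof
    fix y assume y: "y \<in> ball m \<delta>"
    define v where "v = (1/\<delta>) *\<^sub>R (y - m)"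
    have yv: "y = q + (1/2) *\<^sub>R (k - q) + \<delta> *\<^sub>R v" unfolding v_def m_def using d0 by simp
    have nv: "norm v \<le> 1" unfolding v_def using y d0
      by (simp add: dist_norm norm_minus_commute divide_le_eq)
    have vw: "v \<bullet> (k - q) \<le> n" unfolding n_def
      using norm_cauchy_schwarz[of v "k - q"] nv mult_right_mono[OF nv, of "norm (k-q)"] by simp
    have WW: "(k - q) \<bullet> (k - q) = n\<^sup>2" unfolding n_def by (simp add: dot_square_norm)
    have dd: "\<delta>\<^sup>2 \<le> \<delta>" using d0 d1 by (simp add: power2_eq_square mult_left_le_one_le)
    have "\<delta> * (v \<bullet> (k - q)) \<le> \<delta> * n" using vw d0 by simp
    then have hyp: "2*\<delta> + \<delta>\<^sup>2 + 2*\<delta>*(1/2)*(v \<bullet> (k - q)) + (1/2)\<^sup>2 * ((k-q) \<bullet> (k-q)) \<le> (1/2) * ((k-q) \<bullet> (k-q))"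
      unfolding WW using d3 dd by (simp add: algebra_simps power2_eq_square)
    have "\<forall>c\<in>C. norm (y - c) \<le> 1"
    proof
      fix c assume c: "c \<in> C"
      have "norm (q - c) \<le> 1" "norm (k - c) \<le> 1" using q k c KC
        by (auto simp: dist_norm norm_minus_commute)
      then show "norm (y - c) \<le> 1" unfolding yv
        using spindle[OF _ _ _ _ _ nv hyp] d0 by simp
    qed
    then show "y \<in> K" using KC by (auto simp: dist_norm norm_minus_commute)
  qed
  then have "m \<in> interior K" using d0 mem_interior by blast
  then show ?thesis by blast
qed

lemma strict_conv:
  fixes a b :: "'a::euclidean_space"
  assumes "norm a \<le> 1" "norm b \<le> 1" "a \<noteq> b" "0 < l" "l < 1"
  shows "norm ((1 - l) *\<^sub>R a + l *\<^sub>R b) < 1"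
proof -
  have id: "((1 - l) *\<^sub>R a + l *\<^sub>R b) \<bullet> ((1 - l) *\<^sub>R a + l *\<^sub>R b)
     = (1 - l) * (a \<bullet> a) + l * (b \<bullet> b) - l * (1 - l) * ((a - b) \<bullet> (a - b))"
    by (simp add: inner_add_left inner_add_right inner_diff_left inner_diff_right inner_commute algebra_simps power2_eq_square)
  have aa: "a \<bullet> a \<le> 1" using assms(1) by (metis dot_square_norm norm_ge_zero power_le_one)
  have bb: "b \<bullet> b \<le> 1" using assms(2) by (metis dot_square_norm norm_ge_zero power_le_one)
  have ab: "(a - b) \<bullet> (a - b) > 0" using assms(3) by simp
  have "l * (1 - l) * ((a - b) \<bullet> (a - b)) > 0" using ab assms(4,5) by simp
  moreover have "(1 - l) * (a \<bullet> a) \<le> 1 - l" using aa assms(5) by (simp add: mult_left_le_one_le)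
  moreover have "l * (b \<bullet> b) \<le> l" using bb assms(4) by (simp add: mult_left_le_one_le)
  ultimately have "((1 - l) *\<^sub>R a + l *\<^sub>R b) \<bullet> ((1 - l) *\<^sub>R a + l *\<^sub>R b) < 1" unfolding id by linarith
  then show ?thesis by (metis dot_square_norm norm_ge_zero power2_le_imp_le one_power2 zero_le_one not_less order.strict_iff_order power_le_one)
qed


lemma chord_bdd:
  fixes K :: "'a::euclidean_space set"
  assumes "bounded K" "norm u = 1"
  shows "bdd_above {t. x + t *\<^sub>R u \<in> K}" "bdd_below {t. x + t *\<^sub>R u \<in> K}"
proof -
  obtain B where B: "\<forall>k\<in>K. norm k \<le> B" using assms(1) bounded_iff by blast
  have uu: "u \<bullet> u = 1" using assms(2) by (simp add: dot_square_norm)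
  have *: "\<bar>t\<bar> \<le> B + \<bar>x \<bullet> u\<bar>" if "x + t *\<^sub>R u \<in> K" for t
  proof -
    have "t = (x + t *\<^sub>R u) \<bullet> u - x \<bullet> u" using uu by (simp add: inner_add_left)
    moreover have "\<bar>(x + t *\<^sub>R u) \<bullet> u\<bar> \<le> norm (x + t *\<^sub>R u) * norm u" by (rule Cauchy_Schwarz_ineq2)
    moreover have "norm (x + t *\<^sub>R u) \<le> B" using B that by blast
    ultimately have "\<bar>(x + t *\<^sub>R u) \<bullet> u\<bar> \<le> B" "t = (x + t *\<^sub>R u) \<bullet> u - x \<bullet> u" using assms(2) by auto
    then show ?thesis by (auto simp: abs_le_iff abs_if split: if_splits)
  qed
  show "bdd_above {t. x + t *\<^sub>R u \<in> K}"
    unfolding bdd_above_def using * by (intro exI[of _ "B + \<bar>x \<bullet> u\<bar>"]) force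
  show "bdd_below {t. x + t *\<^sub>R u \<in> K}"
    unfolding bdd_below_def using * by (intro exI[of _ "- (B + \<bar>x \<bullet> u\<bar>)"]) force
qed

lemma chord_nonempty:
  assumes "norm u = 1" "x \<in> proj_perp u ` K"
  shows "x \<bullet> u = 0" "{t. x + t *\<^sub>R u \<in> K} \<noteq> {}"
proof -
  obtain k where k: "k \<in> K" "x = proj_perp u k" using assms(2) by blast
  show "x \<bullet> u = 0" using k proj_perp_inner[OF assms(1)] by simp
  have "x + (k \<bullet> u) *\<^sub>R u = k" using k proj_perp_decomp[of k u] by simp
  then have "k \<bullet> u \<in> {t. x + t *\<^sub>R u \<in> K}" using k by simp
  then show "{t. x + t *\<^sub>R u \<in> K} \<noteq> {}" by blast
qed

lemma chord_facts:
  fixes K :: "'a::euclidean_space set"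
  assumes "closed K" "convex K" "bounded K" "norm u = 1" "x \<in> proj_perp u ` K"
  shows "x + chord_lo K u x *\<^sub>R u \<in> K" "x + chord_hi K u x *\<^sub>R u \<in> K"
    "chord_lo K u x \<le> chord_hi K u x"
    "\<And>r. x + r *\<^sub>R u \<in> K \<longleftrightarrow> chord_lo K u x \<le> r \<and> r \<le> chord_hi K u x"
proof -
  define T where "T = {t. x + t *\<^sub>R u \<in> K}"
  have ne: "T \<noteq> {}" unfolding T_def using chord_nonempty[OF assms(4,5)] by blast
  have ba: "bdd_above T" and bb: "bdd_below T" unfolding T_def using chord_bdd[OF assms(3,4)] by auto
  have cl: "closed T"
  proof -
    have "T = (\<lambda>t. x + t *\<^sub>R u) -` K" unfolding T_def by auto
    moreover have "closed ((\<lambda>t. x + t *\<^sub>R u) -` K)"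
      by (rule continuous_closed_vimage[OF assms(1)]) (intro continuous_intros)
    ultimately show ?thesis by simp
  qed
  have lo: "Inf T \<in> T" by (rule closed_contains_Inf[OF ne bb cl])
  have hi: "Sup T \<in> T" by (rule closed_contains_Sup[OF ne ba cl])
  have lh: "Inf T \<le> Sup T" by (rule cInf_le_cSup[OF ne ba bb])
  have lodef: "chord_lo K u x = Inf T" and hidef: "chord_hi K u x = Sup T"
    unfolding chord_lo_def chord_hi_def T_def by auto
  show "x + chord_lo K u x *\<^sub>R u \<in> K" using lo unfolding lodef T_def by simp
  show "x + chord_hi K u x *\<^sub>R u \<in> K" using hi unfolding hidef T_def by simp
  show "chord_lo K u x \<le> chord_hi K u x" using lh unfolding lodef hidef .
  fix r
  show "x + r *\<^sub>R u \<in> K \<longleftrightarrow> chord_lo K u x \<le> r \<and> r \<le> chord_hi K u x"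
  proof
    assume "x + r *\<^sub>R u \<in> K"
    then have "r \<in> T" unfolding T_def by simp
    then show "chord_lo K u x \<le> r \<and> r \<le> chord_hi K u x"
      unfolding lodef hidef using cInf_lower[OF _ bb] cSup_upper[OF _ ba] by auto
  next
    assume r: "chord_lo K u x \<le> r \<and> r \<le> chord_hi K u x"
    show "x + r *\<^sub>R u \<in> K"
    proof (cases "Inf T = Sup T")
      case True
      then have "r = Inf T" using r unfolding lodef hidef by simp
      then show ?thesis using lo unfolding T_def by simp
    next
      case False
      then have lt: "Inf T < Sup T" using lh by simp
      define l where "l = (r - Inf T) / (Sup T - Inf T)"
      have l0: "0 \<le> l" "l \<le> 1" unfolding l_def using r lt unfolding lodef hidef
        by (auto simp: divide_le_eq)
      have eq: "x + r *\<^sub>R u = (1 - l) *\<^sub>R (x + Inf T *\<^sub>R u) + l *\<^sub>R (x + Sup T *\<^sub>R u)"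
      proof -
        have "l * (Sup T - Inf T) = r - Inf T" unfolding l_def using lt by simp
        then have "(1 - l) * Inf T + l * Sup T = r" by (simp add: algebra_simps)
        have "(1 - l) *\<^sub>R (x + Inf T *\<^sub>R u) + l *\<^sub>R (x + Sup T *\<^sub>R u)
             = x + ((1 - l) * Inf T + l * Sup T) *\<^sub>R u" by (simp add: algebra_simps)
        then show ?thesis using \<open>(1 - l) * Inf T + l * Sup T = r\<close> by simp
      qed
      show ?thesis unfolding eq
        by (rule convexD[OF assms(2)]) (use lo hi l0 in \<open>auto simp: T_def\<close>)
    qed
  qed
qed

lemma segment_line:
  fixes x u :: "'a::euclidean_space"
  assumes "s \<le> t"
  shows "closed_segment (x + s *\<^sub>R u) (x + t *\<^sub>R u) = {x + r *\<^sub>R u | r. s \<le> r \<and> r \<le> t}"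
proof
  show "closed_segment (x + s *\<^sub>R u) (x + t *\<^sub>R u) \<subseteq> {x + r *\<^sub>R u | r. s \<le> r \<and> r \<le> t}"
  proof
    fix y assume "y \<in> closed_segment (x + s *\<^sub>R u) (x + t *\<^sub>R u)"
    then obtain l where l: "0 \<le> l" "l \<le> 1" "y = (1 - l) *\<^sub>R (x + s *\<^sub>R u) + l *\<^sub>R (x + t *\<^sub>R u)"
      unfolding closed_segment_def by auto
    have "y = x + ((1 - l) * s + l * t) *\<^sub>R u" using l(3) by (simp add: algebra_simps)
    moreover have "s \<le> (1 - l) * s + l * t" "(1 - l) * s + l * t \<le> t"
      using l(1,2) assms mult_left_mono[OF assms, of l] mult_left_mono[OF assms, of "1-l"]
      by (auto simp: algebra_simps)
    ultimately show "y \<in> {x + r *\<^sub>R u | r. s \<le> r \<and> r \<le> t}" by blast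
  qed
next
  show "{x + r *\<^sub>R u | r. s \<le> r \<and> r \<le> t} \<subseteq> closed_segment (x + s *\<^sub>R u) (x + t *\<^sub>R u)"
  proof
    fix y assume "y \<in> {x + r *\<^sub>R u | r. s \<le> r \<and> r \<le> t}"
    then obtain r where r: "s \<le> r" "r \<le> t" "y = x + r *\<^sub>R u" by blast
    show "y \<in> closed_segment (x + s *\<^sub>R u) (x + t *\<^sub>R u)"
    proof (cases "s = t")
      case True then show ?thesis using r by simp
    next
      case False
      then have lt: "s < t" using assms by simp
      define l where "l = (r - s) / (t - s)"
      have l0: "0 \<le> l" "l \<le> 1" unfolding l_def using r lt by (auto simp: divide_le_eq)
      have "l * (t - s) = r - s" unfolding l_def using lt by simp
      then have "(1 - l) * s + l * t = r" by (simp add: algebra_simps)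
      then have "y = (1 - l) *\<^sub>R (x + s *\<^sub>R u) + l *\<^sub>R (x + t *\<^sub>R u)"
        using r(3) by (simp add: algebra_simps) (metis scaleR_left_distrib)
      then show ?thesis unfolding closed_segment_def using l0 by blast
    qed
  qed
qed


lemma norm_le1_iff: "norm (v::'a::real_normed_vector) \<le> 1 \<longleftrightarrow> (norm v)\<^sup>2 \<le> 1"
  by (metis abs_norm_cancel abs_square_le_1)

lemma steiner_mono:
  fixes K L :: "'a::euclidean_space set"
  assumes "K \<subseteq> L" "bounded L" "norm u = 1"
  shows "steiner u K \<subseteq> steiner u L"
proof
  fix p assume "p \<in> steiner u K"
  then obtain x y where p: "p = x + y *\<^sub>R u" "x \<in> proj_perp u ` K"
    "\<bar>y\<bar> \<le> \<bar>chord_hi K u x - chord_lo K u x\<bar> / 2" unfolding steiner_def by blast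
  define TK where "TK = {t. x + t *\<^sub>R u \<in> K}"
  define TL where "TL = {t. x + t *\<^sub>R u \<in> L}"
  have sub: "TK \<subseteq> TL" unfolding TK_def TL_def using assms(1) by auto
  have ne: "TK \<noteq> {}" unfolding TK_def using chord_nonempty[OF assms(3) p(2)] by blast
  have ba: "bdd_above TL" and bb: "bdd_below TL" unfolding TL_def using chord_bdd[OF assms(2,3)] by auto
  have baK: "bdd_above TK" using bdd_above_mono[OF ba sub] .
  have bbK: "bdd_below TK" using bdd_below_mono[OF bb sub] .
  have "Inf TL \<le> Inf TK" by (rule cInf_superset_mono[OF ne bb sub])
  moreover have "Sup TK \<le> Sup TL" by (rule cSup_subset_mono[OF ne ba sub])
  moreover have "Inf TK \<le> Sup TK" by (rule cInf_le_cSup[OF ne baK bbK])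
  ultimately have "\<bar>chord_hi K u x - chord_lo K u x\<bar> \<le> \<bar>chord_hi L u x - chord_lo L u x\<bar>"
    unfolding chord_hi_def chord_lo_def TK_def TL_def by simp
  moreover have "x \<in> proj_perp u ` L" using p(2) assms(1) by blast
  ultimately have "x \<in> proj_perp u ` L \<and> \<bar>y\<bar> \<le> \<bar>chord_hi L u x - chord_lo L u x\<bar> / 2"
    using p(3) by auto
  then show "p \<in> steiner u L" unfolding steiner_def using p(1) by blast
qed

lemma steiner_in_ball:
  fixes K :: "'a::euclidean_space set"
  assumes "closed K" "convex K" "bounded K" "norm u = 1" "K \<subseteq> cball c 1"
  shows "steiner u K \<subseteq> cball (proj_perp u c) 1"
proof
  fix p assume "p \<in> steiner u K"
  then obtain x y where p: "p = x + y *\<^sub>R u" "x \<in> proj_perp u ` K"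
    "\<bar>y\<bar> \<le> \<bar>chord_hi K u x - chord_lo K u x\<bar> / 2" unfolding steiner_def by blast
  define lo where "lo = chord_lo K u x"
  define hi where "hi = chord_hi K u x"
  note cf = chord_facts[OF assms(1-4) p(2), folded lo_def hi_def]
  have xu: "x \<bullet> u = 0" using chord_nonempty[OF assms(4) p(2)] by simp
  define m where "m = c \<bullet> u"
  define d where "d = x - proj_perp u c"
  have du: "d \<bullet> u = 0" unfolding d_def using xu proj_perp_inner[OF assms(4)] by (simp add: inner_diff_left)
  have dec: "x + r *\<^sub>R u - c = d + (r - m) *\<^sub>R u" for r
    unfolding d_def m_def using proj_perp_decomp[of c u] by (simp add: algebra_simps)
  have sq: "(norm d)\<^sup>2 + (r - m)\<^sup>2 \<le> 1" if "x + r *\<^sub>R u \<in> K" for r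
  proof -
    have "norm (x + r *\<^sub>R u - c) \<le> 1" using that assms(5) by (auto simp: dist_norm norm_minus_commute)
    then show ?thesis unfolding dec norm_le1_iff norm_orth_sq[OF du assms(4)] .
  qed
  have s1: "(norm d)\<^sup>2 + (lo - m)\<^sup>2 \<le> 1" using sq cf(1) .
  have s2: "(norm d)\<^sup>2 + (hi - m)\<^sup>2 \<le> 1" using sq cf(2) .
  have yy: "\<bar>y\<bar> \<le> (hi - lo) / 2" using p(3) cf(3) unfolding lo_def hi_def by simp
  have "y\<^sup>2 \<le> (lo - m)\<^sup>2 \<or> y\<^sup>2 \<le> (hi - m)\<^sup>2"
  proof (cases "\<bar>hi - m\<bar> \<le> \<bar>lo - m\<bar>")
    case True
    then have "\<bar>y\<bar> \<le> \<bar>lo - m\<bar>" using yy by (auto simp: abs_if split: if_splits)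
    then show ?thesis by (simp add: abs_le_square_iff)
  next
    case False
    then have "\<bar>y\<bar> \<le> \<bar>hi - m\<bar>" using yy by (auto simp: abs_if split: if_splits)
    then show ?thesis by (simp add: abs_le_square_iff)
  qed
  then have "(norm d)\<^sup>2 + y\<^sup>2 \<le> 1" using s1 s2 by linarith
  moreover have "p - proj_perp u c = d + y *\<^sub>R u" unfolding p(1) d_def by simp
  ultimately have "norm (p - proj_perp u c) \<le> 1"
    unfolding norm_le1_iff by (simp add: norm_orth_sq[OF du assms(4)])
  then show "p \<in> cball (proj_perp u c) 1" by (simp add: dist_norm norm_minus_commute)
qed

lemma lens_no_frontier:
  fixes z w :: "'a::euclidean_space"
  assumes "a \<in> frontier (cball z 1 \<inter> cball w 1)" "b \<in> cball z 1 \<inter> cball w 1" "b' \<in> cball z 1 \<inter> cball w 1"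
    "b \<noteq> b'" "0 < l" "l < 1" "a = (1 - l) *\<^sub>R b + l *\<^sub>R b'"
  shows False
proof -
  have "norm (a - z) < 1"
  proof -
    have "a - z = (1 - l) *\<^sub>R (b - z) + l *\<^sub>R (b' - z)" using assms(7) by (simp add: algebra_simps)
    moreover have "norm (b - z) \<le> 1" "norm (b' - z) \<le> 1" using assms(2,3) by (auto simp: dist_norm norm_minus_commute)
    ultimately show ?thesis using strict_conv[of "b - z" "b' - z" l] assms(4-6) by simp
  qed
  moreover have "norm (a - w) < 1"
  proof -
    have "a - w = (1 - l) *\<^sub>R (b - w) + l *\<^sub>R (b' - w)" using assms(7) by (simp add: algebra_simps)
    moreover have "norm (b - w) \<le> 1" "norm (b' - w) \<le> 1" using assms(2,3) by (auto simp: dist_norm norm_minus_commute)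
    ultimately show ?thesis using strict_conv[of "b - w" "b' - w" l] assms(4-6) by simp
  qed
  ultimately have "a \<in> ball z 1 \<inter> ball w 1" by (simp add: dist_norm norm_minus_commute)
  moreover have "ball z 1 \<inter> ball w 1 \<subseteq> interior (cball z 1 \<inter> cball w 1)"
    by (rule interior_maximal) auto
  ultimately show False using assms(1) unfolding frontier_def by blast
qed


lemma linear_proj_perp: "linear (proj_perp u)"
  unfolding proj_perp_def by (intro linearI) (simp_all add: inner_add_left algebra_simps)

lemma inner_proj_perp: "norm u = 1 \<Longrightarrow> proj_perp u a \<bullet> k = a \<bullet> proj_perp u k"
  unfolding proj_perp_def by (simp add: inner_diff_left inner_diff_right inner_commute)

theorem proposition4p2:
  fixes K :: "'a::euclidean_space set" and u :: 'a
  assumes "ball_body K" and "K \<noteq> {}" and "bounded K"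
    and "norm u = 1"
    and "\<forall>x\<in>proj_perp u ` K. \<forall>s t.
           K \<inter> {x + r *\<^sub>R u | r. True} = closed_segment (x + s *\<^sub>R u) (x + t *\<^sub>R u) \<and> s \<le> t
           \<longrightarrow> (\<exists>z w. K \<subseteq> cball z 1 \<inter> cball w 1
                 \<and> x + t *\<^sub>R u \<in> frontier (cball z 1 \<inter> cball w 1)
                 \<and> x + s *\<^sub>R u \<in> frontier (cball z 1 \<inter> cball w 1)
                 \<and> ball_body (steiner u (cball z 1 \<inter> cball w 1)))"
  shows "ball_body (steiner u K)"
proof -
  obtain C where KC: "K = (\<Inter>c\<in>C. cball c 1)" using assms(1) unfolding ball_body_def by blast
  have clK: "closed K" and cvK: "convex K" using ball_body_closed_convex[OF assms(1)] by auto
  have cpK: "compact K" using clK assms(3) by (simp add: compact_eq_bounded_closed)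
  have uu: "u \<bullet> u = 1" using assms(4) by (simp add: dot_square_norm)
  have u0: "u \<noteq> 0" using assms(4) by auto
  have main: "\<exists>c. steiner u K \<subseteq> cball c 1 \<and> p \<notin> cball c 1" if pn: "p \<notin> steiner u K" for p
  proof -
    define x where "x = proj_perp u p"
    define y where "y = p \<bullet> u"
    have px: "p = x + y *\<^sub>R u" unfolding x_def y_def by (rule proj_perp_decomp)
    have xu: "x \<bullet> u = 0" unfolding x_def by (rule proj_perp_inner[OF assms(4)])
    show ?thesis
    proof (cases "x \<in> proj_perp u ` K")
      case xin: True
      define lo where "lo = chord_lo K u x"
      define hi where "hi = chord_hi K u x"
      note cf = chord_facts[OF clK cvK assms(3,4) xin, folded lo_def hi_def]
      have ylt: "\<bar>y\<bar> > (hi - lo) / 2"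
      proof (rule ccontr)
        assume "\<not> \<bar>y\<bar> > (hi - lo) / 2"
        then have "\<bar>y\<bar> \<le> \<bar>chord_hi K u x - chord_lo K u x\<bar> / 2"
          using cf(3) unfolding lo_def hi_def by simp
        then have "p \<in> steiner u K" unfolding steiner_def px using xin by blast
        then show False using pn by blast
      qed
      show ?thesis
      proof (cases "lo < hi")
        case lh: True
        have seg: "K \<inter> {x + r *\<^sub>R u | r. True} = closed_segment (x + lo *\<^sub>R u) (x + hi *\<^sub>R u)"
          unfolding segment_line[OF cf(3)] using cf(4) by auto
        obtain z w where zw: "K \<subseteq> cball z 1 \<inter> cball w 1"
          "x + hi *\<^sub>R u \<in> frontier (cball z 1 \<inter> cball w 1)"
          "x + lo *\<^sub>R u \<in> frontier (cball z 1 \<inter> cball w 1)"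
          "ball_body (steiner u (cball z 1 \<inter> cball w 1))"
          using assms(5)[rule_format, OF xin, of lo hi] seg cf(3) by blast
        define L where "L = cball z 1 \<inter> cball w 1"
        have bL: "bounded L" unfolding L_def by auto
        have TL: "x + r *\<^sub>R u \<in> L \<longleftrightarrow> lo \<le> r \<and> r \<le> hi" for r
        proof
          assume rL: "x + r *\<^sub>R u \<in> L"
          show "lo \<le> r \<and> r \<le> hi"
          proof (rule ccontr)
            assume "\<not> (lo \<le> r \<and> r \<le> hi)"
            then consider "r < lo" | "hi < r" by linarith
            then show False
            proof cases
              case 1
              define l where "l = (lo - r) / (hi - r)"
              have l: "0 < l" "l < 1" unfolding l_def using 1 lh by (auto simp: divide_less_eq)
              have "l * (hi - r) = lo - r" unfolding l_def using 1 lh by simp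
              then have "(1 - l) * r + l * hi = lo" by (simp add: algebra_simps)
              then have eq: "x + lo *\<^sub>R u = (1 - l) *\<^sub>R (x + r *\<^sub>R u) + l *\<^sub>R (x + hi *\<^sub>R u)"
                by (simp add: algebra_simps) (metis scaleR_left_distrib)
              have ne: "x + r *\<^sub>R u \<noteq> x + hi *\<^sub>R u" using 1 lh u0 by simp
              show False
                by (rule lens_no_frontier[OF zw(3) rL[unfolded L_def] _ ne l eq])
                  (use cf(2) zw(1) in blast)
            next
              case 2
              define l where "l = (hi - lo) / (r - lo)"
              have l: "0 < l" "l < 1" unfolding l_def using 2 lh by (auto simp: divide_less_eq)
              have "l * (r - lo) = hi - lo" unfolding l_def using 2 lh by simp
              then have "(1 - l) * lo + l * r = hi" by (simp add: algebra_simps)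
              then have eq: "x + hi *\<^sub>R u = (1 - l) *\<^sub>R (x + lo *\<^sub>R u) + l *\<^sub>R (x + r *\<^sub>R u)"
                by (simp add: algebra_simps) (metis scaleR_left_distrib)
              have ne: "x + lo *\<^sub>R u \<noteq> x + r *\<^sub>R u" using 2 lh u0 by simp
              show False
                by (rule lens_no_frontier[OF zw(2) _ rL[unfolded L_def] ne l eq])
                  (use cf(1) zw(1) in blast)
            qed
          qed
        next
          assume "lo \<le> r \<and> r \<le> hi"
          then have "x + r *\<^sub>R u \<in> K" using cf(4) by simp
          then show "x + r *\<^sub>R u \<in> L" using zw(1) unfolding L_def by blast
        qed
        have "{t. x + t *\<^sub>R u \<in> L} = {lo..hi}" by (rule set_eqI) (simp add: TL)
        then have loL: "chord_lo L u x = lo" and hiL: "chord_hi L u x = hi"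
          unfolding chord_lo_def chord_hi_def using cf(3) by auto
        have pnL: "p \<notin> steiner u L"
        proof
          assume "p \<in> steiner u L"
          then obtain x' y' where p': "p = x' + y' *\<^sub>R u" "x' \<in> proj_perp u ` L"
            "\<bar>y'\<bar> \<le> \<bar>chord_hi L u x' - chord_lo L u x'\<bar> / 2" unfolding steiner_def by blast
          have x'u: "x' \<bullet> u = 0" using chord_nonempty[OF assms(4) p'(2)] by simp
          have "y' = y" unfolding y_def p'(1) using x'u uu by (simp add: inner_add_left)
          moreover then have "x' = x" using px p'(1) by simp
          ultimately have "\<bar>y\<bar> \<le> (hi - lo) / 2" using p'(3) loL hiL lh by simp
          then show False using ylt by simp
        qed
        obtain CL where CL: "steiner u L = (\<Inter>c\<in>CL. cball c 1)"
          using zw(4) unfolding ball_body_def L_def by blast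
        then obtain c where c: "c \<in> CL" "p \<notin> cball c 1" using pnL by blast
        have "steiner u K \<subseteq> steiner u L" by (rule steiner_mono[OF zw(1)[folded L_def] bL assms(4)])
        also have "\<dots> \<subseteq> cball c 1" using CL c(1) by blast
        finally show ?thesis using c(2) by blast
      next
        case False
        then have lh: "lo = hi" using cf(3) by simp
        define q where "q = x + lo *\<^sub>R u"
        have qK: "q \<in> K" unfolding q_def using cf(1) .
        have line: "x + r *\<^sub>R u \<in> K \<longleftrightarrow> r = lo" for r using cf(4) lh by auto
        have y0: "y \<noteq> 0" using ylt lh by simp
        have Pq: "proj_perp u q = x" unfolding q_def using proj_perp_add[OF assms(4)] proj_perp_id[OF xu] by simp
        show ?thesis
        proof (cases "\<exists>k\<in>K. k \<noteq> q")
          case False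
          then have Kq: "K = {q}" using qK by blast
          define c where "c = x - sgn y *\<^sub>R u"
          have "steiner u K \<subseteq> cball c 1"
          proof
            fix v assume "v \<in> steiner u K"
            then obtain x' y' where v: "v = x' + y' *\<^sub>R u" "x' \<in> proj_perp u ` K"
              "\<bar>y'\<bar> \<le> \<bar>chord_hi K u x' - chord_lo K u x'\<bar> / 2" unfolding steiner_def by blast
            have "x' = x" using v(2) Kq Pq by simp
            then have "y' = 0" using v(3) lh unfolding lo_def hi_def by simp
            then have "v = x" using v(1) \<open>x' = x\<close> by simp
            moreover have "norm (sgn y *\<^sub>R u) = 1" using y0 assms(4) by (simp add: abs_sgn)
            ultimately show "v \<in> cball c 1" unfolding c_def by (simp add: dist_norm)
          qed
          moreover have "p \<notin> cball c 1"
          proof -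
            have "c - p = - ((y + sgn y) *\<^sub>R u)" unfolding c_def px by (simp add: algebra_simps)
            then have "dist c p = \<bar>y + sgn y\<bar>" using assms(4) by (simp add: dist_norm)
            moreover have "\<bar>y + sgn y\<bar> > 1" using y0 by (cases "y > 0") (auto simp: sgn_if)
            ultimately show ?thesis by simp
          qed
          ultimately show ?thesis by blast
        next
          case True
          then obtain k where k: "k \<in> K" "k \<noteq> q" by blast
          have intK: "interior K \<noteq> {}" by (rule interior_nonempty[OF KC qK k(1) k(2)[symmetric]])
          define lin where "lin = {x + r *\<^sub>R u | r. True}"
          have cvl: "convex lin"
          proof (rule convexI)
            fix v1 v2 :: 'a and a b :: real
            assume v: "v1 \<in> lin" "v2 \<in> lin" and ab: "0 \<le> a" "0 \<le> b" "a + b = 1"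
            obtain r1 r2 where r: "v1 = x + r1 *\<^sub>R u" "v2 = x + r2 *\<^sub>R u" using v unfolding lin_def by blast
            have "a *\<^sub>R v1 + b *\<^sub>R v2 = (a + b) *\<^sub>R x + (a * r1 + b * r2) *\<^sub>R u"
              unfolding r by (simp add: algebra_simps)
            also have "\<dots> = x + (a * r1 + b * r2) *\<^sub>R u" using ab(3) by simp
            finally show "a *\<^sub>R v1 + b *\<^sub>R v2 \<in> lin" unfolding lin_def by blast
          qed
          have disj: "interior K \<inter> lin = {}"
          proof (rule ccontr)
            assume "interior K \<inter> lin \<noteq> {}"
            then obtain r where r: "x + r *\<^sub>R u \<in> interior K" unfolding lin_def by blast
            then obtain e where e: "e > 0" "ball (x + r *\<^sub>R u) e \<subseteq> K" using mem_interior by blast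
            have "x + (r + e/2) *\<^sub>R u \<in> ball (x + r *\<^sub>R u) e"
              using e(1) assms(4) by (simp add: dist_norm algebra_simps)
            then have "r + e/2 = lo" using e(2) line by blast
            moreover have "r = lo" using r interior_subset line by blast
            ultimately show False using e(1) by simp
          qed
          have lne: "lin \<noteq> {}" unfolding lin_def by blast
          obtain a b where ab: "a \<noteq> 0" "\<forall>v\<in>interior K. a \<bullet> v \<le> b" "\<forall>v\<in>lin. a \<bullet> v \<ge> b"
            using separating_hyperplane_sets[OF convex_interior[OF cvK] cvl intK lne disj] by blast
          have au: "a \<bullet> u = 0"
          proof (rule ccontr)
            assume au: "a \<bullet> u \<noteq> 0"
            define r where "r = (b - a \<bullet> x - 1) / (a \<bullet> u)"
            have "x + r *\<^sub>R u \<in> lin" unfolding lin_def by blast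
            then have "a \<bullet> (x + r *\<^sub>R u) \<ge> b" using ab(3) by blast
            moreover have "a \<bullet> (x + r *\<^sub>R u) = b - 1" unfolding r_def using au by (simp add: inner_add_right)
            ultimately show False by simp
          qed
          have aK: "\<forall>v\<in>K. a \<bullet> v \<le> b"
          proof -
            have "closure (interior K) \<subseteq> {v. a \<bullet> v \<le> b}"
              by (rule closure_minimal) (use ab(2) closed_halfspace_le in auto)
            moreover have "closure (interior K) = K" using convex_closure_interior[OF cvK intK] clK by simp
            ultimately show ?thesis by blast
          qed
          have aq: "b \<le> a \<bullet> q" using ab(3) unfolding lin_def q_def by blast
          define \<nu> where "\<nu> = (1 / norm a) *\<^sub>R a"
          have nu1: "norm \<nu> = 1" unfolding \<nu>_def using ab(1) by simp
          have nuu: "\<nu> \<bullet> u = 0" unfolding \<nu>_def using au by simp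
          have mx: "\<forall>v\<in>K. \<nu> \<bullet> v \<le> \<nu> \<bullet> q"
          proof
            fix v assume "v \<in> K"
            then have "a \<bullet> v \<le> a \<bullet> q" using aK aq by force
            then show "\<nu> \<bullet> v \<le> \<nu> \<bullet> q" unfolding \<nu>_def using ab(1)
              by (simp add: divide_right_mono)
          qed
          have Kb: "K \<subseteq> cball (q - \<nu>) 1" by (rule key_ball[OF KC qK nu1 mx])
          have Pc: "proj_perp u (q - \<nu>) = x - \<nu>"
            unfolding proj_perp_diff Pq using proj_perp_id[OF nuu] by simp
          have sb: "steiner u K \<subseteq> cball (x - \<nu>) 1"
            using steiner_in_ball[OF clK cvK assms(3,4) Kb] unfolding Pc .
          have "(norm (p - (x - \<nu>)))\<^sup>2 = 1 + y\<^sup>2"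
          proof -
            have "p - (x - \<nu>) = (x + y *\<^sub>R u) - (x - \<nu>)" using px by (rule arg_cong)
            also have "\<dots> = \<nu> + y *\<^sub>R u" by simp
            finally have eq: "p - (x - \<nu>) = \<nu> + y *\<^sub>R u" .
            show ?thesis unfolding eq norm_orth_sq[OF nuu assms(4)] nu1 by simp
          qed
          then have "(norm (p - (x - \<nu>)))\<^sup>2 > 1" using y0 by simp
          then have "p \<notin> cball (x - \<nu>) 1"
            by (simp add: dist_norm norm_minus_commute norm_le1_iff[symmetric] not_le[symmetric])
          then show ?thesis using sb by blast
        qed
      qed
    next
      case xout: False
      have cvP: "convex (proj_perp u ` K)" by (rule convex_linear_image[OF linear_proj_perp cvK])
      have cpP: "compact (proj_perp u ` K)"
        by (rule compact_continuous_image[OF linear_continuous_on[OF linear_proj_perp[unfolded linear_conv_bounded_linear]] cpK])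
      obtain a b where ab: "a \<bullet> x < b" "\<forall>v\<in>proj_perp u ` K. a \<bullet> v > b"
        using separating_hyperplane_closed_point[OF cvP compact_imp_closed[OF cpP] xout] by blast
      define a' where "a' = proj_perp u a"
      have a'x: "a' \<bullet> x = a \<bullet> x" unfolding a'_def inner_proj_perp[OF assms(4)] proj_perp_id[OF xu] ..
      have a'k: "a' \<bullet> k > b" if "k \<in> K" for k
        using ab(2) that unfolding a'_def inner_proj_perp[OF assms(4)] by blast
      obtain k0 where k0: "k0 \<in> K" using assms(2) by blast
      have a'0: "a' \<noteq> 0" using a'k[OF k0] a'x ab(1) by auto
      define \<nu> where "\<nu> = - (1 / norm a') *\<^sub>R a'"
      have nu1: "norm \<nu> = 1" unfolding \<nu>_def using a'0 by simp
      have nuu: "\<nu> \<bullet> u = 0" unfolding \<nu>_def a'_def using proj_perp_inner[OF assms(4)] by simp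
      have nlt: "\<nu> \<bullet> k < \<nu> \<bullet> x" if "k \<in> K" for k
      proof -
        have "a' \<bullet> x < a' \<bullet> k" using a'k[OF that] a'x ab(1) by simp
        then have "a' \<bullet> x / norm a' < a' \<bullet> k / norm a'" using a'0 by (simp add: divide_strict_right_mono)
        then show ?thesis unfolding \<nu>_def by simp
      qed
      obtain q where q: "q \<in> K" "\<forall>k\<in>K. \<nu> \<bullet> k \<le> \<nu> \<bullet> q"
        using continuous_attains_sup[OF cpK assms(2), of "\<lambda>k. \<nu> \<bullet> k"] continuous_on_inner[OF continuous_on_const continuous_on_id]
        by blast
      have Kb: "K \<subseteq> cball (q - \<nu>) 1" by (rule key_ball[OF KC q(1) nu1 q(2)])
      have Pc: "proj_perp u (q - \<nu>) = proj_perp u q - \<nu>"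
        unfolding proj_perp_diff using proj_perp_id[OF nuu] by simp
      have sb: "steiner u K \<subseteq> cball (proj_perp u q - \<nu>) 1"
        using steiner_in_ball[OF clK cvK assms(3,4) Kb] unfolding Pc .
      have "\<nu> \<bullet> (p - (proj_perp u q - \<nu>)) = \<nu> \<bullet> x - \<nu> \<bullet> q + 1"
      proof -
        have "\<nu> \<bullet> proj_perp u q = \<nu> \<bullet> q" unfolding proj_perp_def using nuu by (simp add: inner_diff_right)
        then show ?thesis unfolding px using nuu nu1 by (simp add: inner_add_right inner_diff_right dot_square_norm)
      qed
      moreover have "\<nu> \<bullet> (p - (proj_perp u q - \<nu>)) \<le> norm (p - (proj_perp u q - \<nu>))"
        using norm_cauchy_schwarz[of \<nu> "p - (proj_perp u q - \<nu>)"] nu1 by simp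
      moreover have "\<nu> \<bullet> q < \<nu> \<bullet> x" using nlt[OF q(1)] .
      ultimately have "norm (p - (proj_perp u q - \<nu>)) > 1" by linarith
      then have "p \<notin> cball (proj_perp u q - \<nu>) 1" by (simp add: dist_norm norm_minus_commute)
      then show ?thesis using sb by blast
    qed
  qed
  show ?thesis
    unfolding ball_body_def
  proof (intro exI[of _ "{c. steiner u K \<subseteq> cball c 1}"] equalityI)
    show "steiner u K \<subseteq> (\<Inter>c\<in>{c. steiner u K \<subseteq> cball c 1}. cball c 1)" by blast
    show "(\<Inter>c\<in>{c. steiner u K \<subseteq> cball c 1}. cball c 1) \<subseteq> steiner u K"
    proof
      fix p assume p: "p \<in> (\<Inter>c\<in>{c. steiner u K \<subseteq> cball c 1}. cball c 1)"
      show "p \<in> steiner u K"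
      proof (rule ccontr)
        assume "p \<notin> steiner u K"
        then obtain c where "steiner u K \<subseteq> cball c 1" "p \<notin> cball c 1" using main by blast
        then show False using p by blast
      qed
    qed
  qed
qed

end
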